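(* Let $E\in\mathbb{R}^{n\times n}$. If there exists a diagonal positive definite matrix $P\in\mathbb{R}^{n\times n}$ such that $$E^\top P+PE-2P\prec 0,$$ then $E\in\mathbb{B}_\Theta$, i.e. $\operatorname{rank}(I_n-\Theta E)=n$ for every diagonal positive definite matrix $\Theta\in\mathbb{R}^{n\times n}$ with $\Theta\preceq I_n$.
   Context: For a square matrix $E\in\mathbb{R}^{n\times n}$, we write $E\in\mathbb{B}_\Theta$ if $\operatorname{rank}(I_n-\Theta E)=n$ for all diagonal positive definite $\Theta\in\mathbb{R}^{n\times n}$ satisfying $\Theta\preceq I_n$. The notation $\prec 0$, $\preceq$ refers to the Loewner order on symmetric matrices. *)

theory Defs
  imports "HOL-Analysis.Analysis"
begin

definition diagonal_mat :: "real^'n^'n \<Rightarrow> bool" where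
  "diagonal_mat A \<longleftrightarrow> (\<forall>i j. i \<noteq> j \<longrightarrow> A $ i $ j = 0)"

definition symmetric_mat :: "real^'n^'n \<Rightarrow> bool" where
  "symmetric_mat A \<longleftrightarrow> transpose A = A"

definition pos_def :: "real^'n^'n \<Rightarrow> bool" where
  "pos_def A \<longleftrightarrow> symmetric_mat A \<and> (\<forall>x. x \<noteq> 0 \<longrightarrow> x \<bullet> (A *v x) > 0)"

definition pos_semidef :: "real^'n^'n \<Rightarrow> bool" where
  "pos_semidef A \<longleftrightarrow> symmetric_mat A \<and> (\<forall>x. x \<bullet> (A *v x) \<ge> 0)"

definition loewner_lt :: "real^'n^'n \<Rightarrow> real^'n^'n \<Rightarrow> bool" where
  "loewner_lt A B \<longleftrightarrow> symmetric_mat A \<and> symmetric_mat B \<and> pos_def (B - A)"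

definition loewner_le :: "real^'n^'n \<Rightarrow> real^'n^'n \<Rightarrow> bool" where
  "loewner_le A B \<longleftrightarrow> symmetric_mat A \<and> symmetric_mat B \<and> pos_semidef (B - A)"

definition B_Theta :: "real^'n^'n \<Rightarrow> bool" where
  "B_Theta E \<longleftrightarrow> (\<forall>\<Theta>::real^'n^'n. diagonal_mat \<Theta> \<and> pos_def \<Theta> \<and> loewner_le \<Theta> (mat 1)
       \<longrightarrow> rank (mat 1 - \<Theta> ** E) = CARD('n))"

end

theory Submission
  imports Defs
begin

lemma axis_inner: "axis i 1 \<bullet> (v::real^'n) = v $ i"
  by (simp add: cart_eq_inner_axis inner_commute)

lemma scaleR_mv: "((c::real) *\<^sub>R A) *v v = c *\<^sub>R (A *v (v::real^'n))"
  by (simp add: vec_eq_iff matrix_vector_mult_def sum_distrib_left algebra_simps)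

lemma diag_mv:
  fixes P :: "real^'n^'n"
  assumes "diagonal_mat P"
  shows "(P *v v) $ i = P $ i $ i * v $ i"
proof -
  have "(P *v v) $ i = (\<Sum>j\<in>UNIV. P $ i $ j * v $ j)" by (simp add: matrix_vector_mult_def)
  also have "\<dots> = P $ i $ i * v $ i"
    by (subst sum.remove[of UNIV i]) (use assms in \<open>auto simp: diagonal_mat_def\<close>)
  finally show ?thesis .
qed

lemma posdef_diag:
  fixes P :: "real^'n^'n"
  assumes "pos_def P" "diagonal_mat P"
  shows "P $ i $ i > 0"
proof -
  have "axis i 1 \<noteq> (0::real^'n)" by (simp add: axis_eq_0_iff)
  hence "axis i 1 \<bullet> (P *v axis i 1) > 0" using assms unfolding pos_def_def by blast
  moreover have "axis i 1 \<bullet> (P *v axis i (1::real)) = P $ i $ i"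
    by (simp add: axis_inner diag_mv[OF assms(2)])
  ultimately show ?thesis by simp
qed

lemma le1_diag:
  fixes T :: "real^'n^'n"
  assumes "loewner_le T (mat 1)" "diagonal_mat T"
  shows "T $ i $ i \<le> 1"
proof -
  have "axis i 1 \<bullet> ((mat 1 - T) *v axis i 1) \<ge> 0" using assms unfolding loewner_le_def pos_semidef_def by blast
  moreover have "axis i 1 \<bullet> ((mat 1 - T) *v axis i (1::real)) = 1 - T $ i $ i"
    by (simp add: axis_inner matrix_vector_mult_diff_rdistrib diag_mv[OF assms(2)])
  ultimately show ?thesis by simp
qed

theorem lemma1:
  fixes E :: "real^'n^'n"
  assumes "\<exists>P::real^'n^'n. diagonal_mat P \<and> pos_def P \<and>
             loewner_lt (transpose E ** P + P ** E - 2 *\<^sub>R P) 0"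
  shows "B_Theta E"
  unfolding B_Theta_def
proof (intro allI impI)
  fix T :: "real^'n^'n"
  assume T: "diagonal_mat T \<and> pos_def T \<and> loewner_le T (mat 1)"
  obtain P :: "real^'n^'n" where P: "diagonal_mat P" "pos_def P"
    and M: "loewner_lt (transpose E ** P + P ** E - 2 *\<^sub>R P) 0" using assms by blast
  show "rank (mat 1 - T ** E) = CARD('n)"
  proof (rule ccontr)
    assume "rank (mat 1 - T ** E) \<noteq> CARD('n)"
    hence "\<not> inj ((*v) (mat 1 - T ** E))" using full_rank_injective by blast
    then obtain a b where ab: "a \<noteq> b" "(mat 1 - T ** E) *v a = (mat 1 - T ** E) *v b"
      unfolding inj_def by blast
    define x where "x = a - b"
    have x0: "x \<noteq> 0" using ab by (simp add: x_def)
    have "(mat 1 - T ** E) *v x = 0" using ab by (simp add: x_def matrix_vector_mult_diff_distrib)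
    hence xeq: "x = T *v (E *v x)"
      by (simp add: matrix_vector_mult_diff_rdistrib matrix_vector_mul_assoc)
    define y where "y = E *v x"
    have xi: "x $ i = T $ i $ i * y $ i" for i using xeq diag_mv[OF conjunct1[OF T]] y_def by metis
    have neg: "x \<bullet> ((transpose E ** P + P ** E - 2 *\<^sub>R P) *v x) < 0"
    proof -
      have "pos_def (0 - (transpose E ** P + P ** E - 2 *\<^sub>R P))" using M by (simp add: loewner_lt_def)
      hence "x \<bullet> ((0 - (transpose E ** P + P ** E - 2 *\<^sub>R P)) *v x) > 0"
        using x0 unfolding pos_def_def by blast
      thus ?thesis by (simp add: matrix_vector_mult_diff_rdistrib inner_diff_right)
    qed
    have expand: "x \<bullet> ((transpose E ** P + P ** E - 2 *\<^sub>R P) *v x)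
        = 2 * (\<Sum>i\<in>UNIV. P$i$i * T$i$i * (y$i)^2) - 2 * (\<Sum>i\<in>UNIV. P$i$i * (T$i$i)^2 * (y$i)^2)"
    proof -
      have "x \<bullet> ((transpose E ** P + P ** E - 2 *\<^sub>R P) *v x)
          = (E *v x) \<bullet> (P *v x) + x \<bullet> (P *v (E *v x)) - 2 * (x \<bullet> (P *v x))"
        apply (simp add: matrix_vector_mult_add_rdistrib matrix_vector_mult_diff_rdistrib
            inner_add_right inner_diff_right matrix_vector_mul_assoc[symmetric]
            inner_commute[of x] dot_lmul_matrix scaleR_mv)
        by (simp add: inner_commute)
      also have "\<dots> = 2 * (\<Sum>i\<in>UNIV. P$i$i * T$i$i * (y$i)^2) - 2 * (\<Sum>i\<in>UNIV. P$i$i * (T$i$i)^2 * (y$i)^2)"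
        by (simp add: inner_vec_def diag_mv[OF P(1)] xi y_def[symmetric] sum_distrib_left
            sum_subtractf[symmetric] sum.distrib[symmetric] power2_eq_square algebra_simps)
      finally show ?thesis .
    qed
    have "(\<Sum>i\<in>UNIV. P$i$i * (T$i$i)^2 * (y$i)^2) \<le> (\<Sum>i\<in>UNIV. P$i$i * T$i$i * (y$i)^2)"
    proof (rule sum_mono)
      fix i
      have p: "P$i$i > 0" by (rule posdef_diag[OF P(2) P(1)])
      have t: "T$i$i > 0" using posdef_diag T by blast
      have t1: "T$i$i \<le> 1" using le1_diag T by blast
      have "T$i$i * T$i$i \<le> T$i$i" using t t1 by (simp add: mult_le_cancel_left1)
      hence "P$i$i * (T$i$i * T$i$i) * (y$i)^2 \<le> P$i$i * T$i$i * (y$i)^2"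
        using p by (intro mult_right_mono mult_left_mono) auto
      thus "P$i$i * (T$i$i)^2 * (y$i)^2 \<le> P$i$i * T$i$i * (y$i)^2" by (simp add: power2_eq_square)
    qed
    thus False using neg expand by linarith
  qed
qed

end
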